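(* Let $k\ge 2$, let $a_1\ge a_2\ge\cdots\ge a_k\ge 1$ be integers, and put $t=\sum_{i=1}^k a_i$. Let $G$ be a graph of order $n>t^2-t-1$ which does not contain the disjoint union $\bigcup_{i=1}^k P_{2a_i}$ as a subgraph. If $e(G)\ge (t-1)n-(t^2-t-1)$, then there exists an induced subgraph $H$ of $G$ such that $|V(H)|\ge n-(t^2-t-1)$, $\delta(H)\ge t-1$, and $d_H(v)\le t-2$ for every vertex $v\in V(G)\setminus V(H)$.
   Context: All graphs are finite and simple. $P_m$ is the path on $m$ vertices, $e(G)$ is the number of edges of $G$, $\delta(H)$ the minimum degree of $H$, and $d_H(v)=|N(v)\cap V(H)|$ is the number of neighbours of $v$ lying in $V(H)$. *)

theory Defs
  imports Main
begin

definition simple_graph :: "'a set \<Rightarrow> 'a set set \<Rightarrow> bool" where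
  "simple_graph V E \<longleftrightarrow> finite V \<and> (\<forall>e\<in>E. e \<subseteq> V \<and> card e = 2)"

definition num_edges :: "'a set set \<Rightarrow> nat" where
  "num_edges E = card E"

text \<open>A (not necessarily induced) copy of the path on length xs vertices in G.\<close>
definition is_path :: "'a set \<Rightarrow> 'a set set \<Rightarrow> 'a list \<Rightarrow> bool" where
  "is_path V E xs \<longleftrightarrow> distinct xs \<and> set xs \<subseteq> V \<and>
     (\<forall>i. Suc i < length xs \<longrightarrow> {xs ! i, xs ! Suc i} \<in> E)"

definition contains_linear_forest :: "'a set \<Rightarrow> 'a set set \<Rightarrow> nat \<Rightarrow> (nat \<Rightarrow> nat) \<Rightarrow> bool" where
  "contains_linear_forest V E k a \<longleftrightarrow>
     (\<exists>P :: nat \<Rightarrow> 'a list.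
        (\<forall>i\<in>{1..k}. is_path V E (P i) \<and> length (P i) = 2 * a i) \<and>
        (\<forall>i\<in>{1..k}. \<forall>j\<in>{1..k}. i \<noteq> j \<longrightarrow> set (P i) \<inter> set (P j) = {}))"

text \<open>d_H(v) for the induced subgraph H = G[S]: number of neighbours of v in S.\<close>
definition deg_in :: "'a set set \<Rightarrow> 'a set \<Rightarrow> 'a \<Rightarrow> nat" where
  "deg_in E S v = card {u \<in> S. {v, u} \<in> E}"

end

theory Submission
  imports Defs
begin

lemma card2E: assumes "card e = 2" obtains a b where "e = {a,b}" "a \<noteq> b"
  using assms unfolding card_2_iff by blast


lemma path_mono: "is_path V E xs \<Longrightarrow> V \<subseteq> V' \<Longrightarrow> E \<subseteq> E' \<Longrightarrow> is_path V' E' xs"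
  unfolding is_path_def by blast

lemma path_cons:
  assumes "is_path V E xs" "xs \<noteq> []" "w \<in> V" "w \<notin> set xs" "{w, xs!0} \<in> E"
  shows "is_path V E (w # xs)"
  using assms unfolding is_path_def
  by (auto simp: nth_Cons split: nat.splits)

lemma path_snoc:
  assumes "is_path V E xs" "xs \<noteq> []" "w \<in> V" "w \<notin> set xs" "{xs!(length xs - 1), w} \<in> E"
  shows "is_path V E (xs @ [w])"
  unfolding is_path_def
proof (intro conjI allI impI)
  show "distinct (xs @ [w])" "set (xs @ [w]) \<subseteq> V" using assms unfolding is_path_def by auto
  fix i assume i: "Suc i < length (xs @ [w])"
  show "{(xs @ [w]) ! i, (xs @ [w]) ! Suc i} \<in> E"
  proof (cases "Suc i < length xs")
    case True then show ?thesis using assms(1) unfolding is_path_def by (simp add: nth_append)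
  next
    case False
    then have "i = length xs - 1" "Suc i = length xs" using i by auto
    then show ?thesis using assms(5) by (simp add: nth_append)
  qed
qed

lemma path_length_le:
  assumes "finite V" "is_path V E xs" shows "length xs \<le> card V"
proof -
  have "length xs = card (set xs)" using assms distinct_card unfolding is_path_def by metis
  also have "\<dots> \<le> card V" using assms card_mono unfolding is_path_def by metis
  finally show ?thesis .
qed

lemma rot_path:
  assumes "distinct C" "set C \<subseteq> V" "\<forall>i. Suc i < length C \<longrightarrow> {C!i, C!Suc i} \<in> E"
    "C \<noteq> []" "{C!(length C - 1), C!0} \<in> E"
  shows "is_path V E (rotate m C)"
  unfolding is_path_def
proof (intro conjI allI impI)
  show "distinct (rotate m C)" "set (rotate m C) \<subseteq> V" using assms by auto
  fix n assume n: "Suc n < length (rotate m C)"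
  define L where "L = length C"
  have L: "L > 0" using assms(4) L_def by auto
  define j where "j = (m + n) mod L"
  have jl: "j < L" using L j_def by auto
  have e1: "rotate m C ! n = C ! j" using n by (simp add: nth_rotate j_def L_def)
  have e2: "rotate m C ! Suc n = C ! (Suc (m+n) mod L)" using n by (simp add: nth_rotate L_def)
  show "{rotate m C ! n, rotate m C ! Suc n} \<in> E"
  proof (cases "Suc j = L")
    case True
    then have "Suc (m+n) mod L = 0" by (simp add: mod_Suc j_def)
    moreover have "j = length C - 1" using True L_def by simp
    ultimately show ?thesis using e1 e2 assms(5) by (simp add: insert_commute)
  next
    case False
    then have "Suc (m+n) mod L = Suc j" by (simp add: mod_Suc j_def)
    then show ?thesis using e1 e2 False jl assms(3) L_def by simp
  qed
qed



lemma cycle_from_path: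
  assumes P: "is_path V E P" and len: "length P = Suc p" and ip: "i < p"
    and e1: "{P!0, P!Suc i} \<in> E" and e2: "{P!p, P!i} \<in> E"
  shows "\<exists>C. distinct C \<and> set C = set P \<and> (\<forall>j. Suc j < length C \<longrightarrow> {C!j, C!Suc j} \<in> E)
            \<and> C \<noteq> [] \<and> {C!(length C - 1), C!0} \<in> E"
proof -
  define \<sigma> where "\<sigma> j = (if j \<le> i then j else p + i + 1 - j)" for j
  define C where "C = map (\<lambda>j. P ! \<sigma> j) [0..<Suc p]"
  have lenC: "length C = Suc p" by (simp add: C_def)
  have Cn: "C ! j = P ! \<sigma> j" if "j < Suc p" for j using that unfolding C_def by (simp del: upt_Suc)
  have sig_lt: "\<sigma> j < Suc p" if "j < Suc p" for j using that ip unfolding \<sigma>_def by (cases "j \<le> i") simp_all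
  have inj: "inj_on \<sigma> {0..<Suc p}" 
  proof (rule inj_onI)
    fix x y assume x: "x \<in> {0..<Suc p}" and y: "y \<in> {0..<Suc p}" and sxy: "\<sigma> x = \<sigma> y"
    have eq: "(if x \<le> i then x else p+i+1-x) = (if y \<le> i then y else p+i+1-y)" using sxy by (simp only: \<sigma>_def)
    show "x = y"
    proof (cases "x \<le> i"; cases "y \<le> i")
      assume "x \<le> i" "y \<le> i" then show ?thesis using eq by simp
    next
      assume "x \<le> i" "\<not> y \<le> i" then show ?thesis using eq y by simp
    next
      assume "\<not> x \<le> i" "y \<le> i" then show ?thesis using eq x by simp
    next
      assume "\<not> x \<le> i" "\<not> y \<le> i" then show ?thesis using eq x y by simp
    qed
  qed
  have dP: "distinct P" and edP: "\<And>j. Suc j < length P \<Longrightarrow> {P!j, P!Suc j} \<in> E"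
    using P unfolding is_path_def by auto
  have dC: "distinct C"
  proof -
    have "inj_on (\<lambda>j. P ! \<sigma> j) {0..<Suc p}"
    proof (rule inj_onI)
      fix x y assume x: "x \<in> {0..<Suc p}" and y: "y \<in> {0..<Suc p}" and eq: "P ! \<sigma> x = P ! \<sigma> y"
      have "\<sigma> x < length P" "\<sigma> y < length P" using sig_lt x y len by auto
      then show "x = y" using eq dP inj x y by (metis nth_eq_iff_index_eq inj_on_def)
    qed
    then show ?thesis unfolding C_def distinct_map by (simp del: upt_Suc)
  qed
  have sub: "set C \<subseteq> set P"
  proof
    fix x assume "x \<in> set C"
    then obtain j where "j < Suc p" "x = C ! j" using lenC by (metis in_set_conv_nth)
    then show "x \<in> set P" using Cn sig_lt len by (metis nth_mem)
  qed
  have "card (set C) = card (set P)" using dC dP lenC len by (simp add: distinct_card)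
  then have setC: "set C = set P" using sub by (simp add: card_subset_eq)
  have adj: "{C!j, C!Suc j} \<in> E" if "Suc j < length C" for j
  proof -
    have j: "Suc j < Suc p" using that lenC by simp
    consider "j < i" | "j = i" | "j > i" by linarith
    then show ?thesis
    proof cases
      case 1 then show ?thesis using Cn[of j] Cn[of "Suc j"] j edP[of j] len by (simp add: \<sigma>_def)
    next
      case 2 then show ?thesis using Cn[of j] Cn[of "Suc j"] j e2 ip by (simp add: \<sigma>_def insert_commute)
    next
      case 3
      then have "\<sigma> j = Suc (p + i - j)" "\<sigma> (Suc j) = p + i - j" using j by (auto simp: \<sigma>_def)
      moreover have "Suc (p + i - j) < length P" using 3 j len by simp
      ultimately show ?thesis using Cn[of j] Cn[of "Suc j"] j edP[of "p + i - j"]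
        by (simp add: insert_commute)
    qed
  qed
  have wrap: "{C!(length C - 1), C!0} \<in> E"
    using Cn[of p] Cn[of 0] lenC ip e1 by (simp add: \<sigma>_def insert_commute)
  show ?thesis using dC setC adj wrap lenC by (intro exI[of _ C]) auto
qed



lemma reduce:
  assumes fin: "finite V" and wf: "\<forall>e\<in>E. e \<subseteq> V \<and> card e = 2"
    and big: "(t-1) * card V < card E" and XV: "X \<subseteq> V" and Xne: "X \<noteq> {}"
    and small: "card {e\<in>E. e \<inter> X \<noteq> {}} \<le> (t-1) * card X"
  shows "card (V-X) < card V \<and> (\<forall>e\<in>{e\<in>E. e \<inter> X = {}}. e \<subseteq> V-X \<and> card e = 2)
     \<and> (t-1) * card (V-X) < card {e\<in>E. e \<inter> X = {}}"
proof (intro conjI)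
  have finX: "finite X" using fin XV finite_subset by blast
  have cX: "card X > 0" using finX Xne by (simp add: card_gt_0_iff)
  have cV: "card V = card (V - X) + card X"
    using card_Diff_subset[OF finX XV] card_mono[OF fin XV] by simp
  then show "card (V-X) < card V" using cX by simp
  show "\<forall>e\<in>{e\<in>E. e \<inter> X = {}}. e \<subseteq> V-X \<and> card e = 2" using wf by auto
  have "E \<subseteq> Pow V" using wf by auto
  then have finE: "finite E" using fin finite_subset by blast
  have "E = {e\<in>E. e \<inter> X = {}} \<union> {e\<in>E. e \<inter> X \<noteq> {}}" by auto
  then have "card E = card {e\<in>E. e \<inter> X = {}} + card {e\<in>E. e \<inter> X \<noteq> {}}"
    using card_Un_disjoint[of "{e\<in>E. e \<inter> X = {}}" "{e\<in>E. e \<inter> X \<noteq> {}}"] finE by auto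
  then show "(t-1) * card (V-X) < card {e\<in>E. e \<inter> X = {}}"
    using big small cV by (simp add: add_mult_distrib2)
qed

lemma EG_aux:
  fixes t :: nat
  assumes t1: "t \<ge> 1"
  shows "finite V \<Longrightarrow> \<forall>e\<in>E. e \<subseteq> V \<and> card e = 2 \<Longrightarrow> (t-1) * card V < card E
     \<Longrightarrow> \<exists>xs. is_path V E xs \<and> 2*t \<le> length xs"
proof (induction "card V" arbitrary: V E rule: less_induct)
  case less
  note fin = less.prems(1) and wf = less.prems(2) and big = less.prems(3)
  have IH: "\<exists>xs. is_path V E xs \<and> 2*t \<le> length xs"
    if X: "X \<subseteq> V" "X \<noteq> {}" "card {e\<in>E. e \<inter> X \<noteq> {}} \<le> (t-1) * card X" for X
  proof -
    have r: "card (V-X) < card V \<and> (\<forall>e\<in>{e\<in>E. e \<inter> X = {}}. e \<subseteq> V-X \<and> card e = 2)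
     \<and> (t-1) * card (V-X) < card {e\<in>E. e \<inter> X = {}}"
      using reduce[OF fin wf big X] .
    have "finite (V - X)" using fin by simp
    then obtain xs where xs: "is_path (V-X) {e\<in>E. e \<inter> X = {}} xs" "2*t \<le> length xs"
      using less.hyps[of "V-X" "{e\<in>E. e \<inter> X = {}}"] r by blast
    have "is_path V E xs" by (rule path_mono[OF xs(1)]) auto
    then show ?thesis using xs(2) by blast
  qed
  show ?case
  proof (cases "\<exists>v\<in>V. deg_in E V v < t")
    case True
    then obtain v where v: "v \<in> V" "deg_in E V v < t" by blast
    have sub1: "{e\<in>E. e \<inter> {v} \<noteq> {}} \<subseteq> (\<lambda>u. {v,u}) ` {u\<in>V. {v,u} \<in> E}"
    proof
      fix e assume e: "e \<in> {e\<in>E. e \<inter> {v} \<noteq> {}}"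
      then have "card e = 2" "e \<subseteq> V" "v \<in> e" using wf by auto
      then obtain u where "e = {v,u}" "u \<in> V"
      proof -
        obtain a b where ab: "e = {a,b}" "a \<noteq> b" by (rule card2E[OF \<open>card e = 2\<close>])
        show ?thesis
        proof (cases "a = v")
          case True then show ?thesis using that ab \<open>e \<subseteq> V\<close> by auto
        next
          case False then have "b = v" using ab \<open>v \<in> e\<close> by auto
          then show ?thesis using that[of a] ab \<open>e \<subseteq> V\<close> by (auto simp: insert_commute)
        qed
      qed
      then show "e \<in> (\<lambda>u. {v,u}) ` {u\<in>V. {v,u} \<in> E}" using e by auto
    qed
    have fin1: "finite {u\<in>V. {v,u} \<in> E}" using fin by simp
    have "card {e\<in>E. e \<inter> {v} \<noteq> {}} \<le> card ((\<lambda>u. {v,u}) ` {u\<in>V. {v,u} \<in> E})"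
      by (rule card_mono[OF finite_imageI[OF fin1] sub1])
    also have "\<dots> \<le> deg_in E V v" unfolding deg_in_def by (rule card_image_le[OF fin1])
    finally have "card {e\<in>E. e \<inter> {v} \<noteq> {}} \<le> (t-1) * card {v}" using v by simp
    then show ?thesis using IH[of "{v}"] v by blast
  next
    case False
    then have deg: "\<And>v. v \<in> V \<Longrightarrow> t \<le> deg_in E V v" by auto
    have "E \<noteq> {}" using big by auto
    then obtain e where "e \<in> E" by auto
    then have "card e = 2" "e \<subseteq> V" using wf by auto
    obtain x y where xy0: "e = {x,y}" "x \<noteq> y" by (rule card2E[OF \<open>card e = 2\<close>])
    then have xy: "e = {x,y}" "x \<noteq> y" "x \<in> V" "y \<in> V" using \<open>e \<subseteq> V\<close> by auto
    have "is_path V E [x,y]" using xy \<open>e \<in> E\<close> unfolding is_path_def by (auto simp: less_Suc_eq)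
    moreover have "\<forall>ys. is_path V E ys \<longrightarrow> length ys < Suc (card V)"
      using path_length_le[OF fin] by (simp add: less_Suc_eq_le)
    ultimately obtain P where P: "is_path V E P" and Pmax: "\<And>ys. is_path V E ys \<Longrightarrow> length ys \<le> length P"
      using ex_has_greatest_nat[of "is_path V E" "[x,y]" length "Suc (card V)"] by blast
    have P2: "length P \<ge> 2" using Pmax[OF \<open>is_path V E [x,y]\<close>] by simp
    show ?thesis
    proof (cases "2*t \<le> length P")
      case True then show ?thesis using P by auto
    next
      case False
      define p where "p = length P - 1"
      have lenP: "length P = Suc p" using P2 p_def by simp
      have Pne: "P \<noteq> []" using lenP by auto
      have dP: "distinct P" and PV: "set P \<subseteq> V" using P unfolding is_path_def by auto
      have nb0: "u \<in> set P" if "u \<in> V" "{P!0, u} \<in> E" for u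
      proof (rule ccontr)
        assume "u \<notin> set P"
        moreover have "{u, P!0} \<in> E" using that(2) by (simp add: insert_commute)
        ultimately have "is_path V E (u # P)" using path_cons[OF P Pne that(1)] by blast
        then show False using Pmax by fastforce
      qed
      have nbp: "u \<in> set P" if "u \<in> V" "{P!p, u} \<in> E" for u
      proof (rule ccontr)
        assume "u \<notin> set P"
        moreover have "{P!(length P - 1), u} \<in> E" using that(2) p_def by simp
        ultimately have "is_path V E (P @ [u])" using path_snoc[OF P Pne that(1)] by blast
        then show False using Pmax by fastforce
      qed
      define A where "A = {i. i < p \<and> {P!0, P!Suc i} \<in> E}"
      define B where "B = {i. i < p \<and> {P!p, P!i} \<in> E}"
      have noloop: "{w, w} \<notin> E" for w using wf by fastforce
      have subA: "{u\<in>V. {P!0,u} \<in> E} \<subseteq> (\<lambda>i. P!Suc i) ` A"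
      proof
        fix u assume u: "u \<in> {u\<in>V. {P!0,u} \<in> E}"
        then have "u \<in> set P" using nb0 by auto
        then obtain j where j: "j < Suc p" "u = P!j" using lenP by (metis in_set_conv_nth)
        have "j \<noteq> 0"
        proof
          assume "j = 0" then show False using u j noloop[of "P!0"] by simp
        qed
        then obtain i where "j = Suc i" using not0_implies_Suc by blast
        then show "u \<in> (\<lambda>i. P!Suc i) ` A" using j u A_def by auto
      qed
      have finA: "finite A" unfolding A_def by simp
      have "P!0 \<in> V" using PV lenP by (metis nth_mem subsetD zero_less_Suc)
      then have "t \<le> card {u\<in>V. {P!0,u} \<in> E}" using deg[of "P!0"] unfolding deg_in_def by simp
      also have "\<dots> \<le> card ((\<lambda>i. P!Suc i) ` A)" by (rule card_mono[OF finite_imageI[OF finA] subA])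
      also have "\<dots> \<le> card A" by (rule card_image_le[OF finA])
      finally have cA: "t \<le> card A" .
      have subB: "{u\<in>V. {P!p,u} \<in> E} \<subseteq> (\<lambda>i. P!i) ` B"
      proof
        fix u assume u: "u \<in> {u\<in>V. {P!p,u} \<in> E}"
        then have "u \<in> set P" using nbp by auto
        then obtain j where j: "j < Suc p" "u = P!j" using lenP by (metis in_set_conv_nth)
        have "j \<noteq> p"
        proof
          assume "j = p" then show False using u j noloop[of "P!p"] by simp
        qed
        then show "u \<in> (\<lambda>i. P!i) ` B" using j u B_def by auto
      qed
      have finB: "finite B" unfolding B_def by simp
      have "P!p \<in> V" using PV lenP by (metis nth_mem subsetD lessI)
      then have "t \<le> card {u\<in>V. {P!p,u} \<in> E}" using deg[of "P!p"] unfolding deg_in_def by simp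
      also have "\<dots> \<le> card ((\<lambda>i. P!i) ` B)" by (rule card_mono[OF finite_imageI[OF finB] subB])
      also have "\<dots> \<le> card B" by (rule card_image_le[OF finB])
      finally have cB: "t \<le> card B" .
      have "A \<union> B \<subseteq> {..<p}" unfolding A_def B_def by auto
      then have "card (A \<union> B) \<le> p" by (metis card_lessThan card_mono finite_lessThan)
      moreover have "card (A \<union> B) + card (A \<inter> B) = card A + card B"
        using card_Un_Int[OF finA finB] by simp
      ultimately have "card (A \<inter> B) > 0" using cA cB False lenP by linarith
      then have "A \<inter> B \<noteq> {}" by auto
      then obtain i where i: "i \<in> A" "i \<in> B" by blast
      then have ip: "i < p" "{P!0, P!Suc i} \<in> E" "{P!p, P!i} \<in> E" unfolding A_def B_def by auto
      obtain C where C: "distinct C" "set C = set P" "\<forall>j. Suc j < length C \<longrightarrow> {C!j, C!Suc j} \<in> E"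
        "C \<noteq> []" "{C!(length C - 1), C!0} \<in> E"
        using cycle_from_path[OF P lenP ip] by blast
      have lenC: "length C = length P" using distinct_card[OF C(1)] distinct_card[OF dP] C(2) by simp
      have noout: "u \<in> set P" if "x \<in> set P" "u \<in> V" "{x,u} \<in> E" for x u
      proof (rule ccontr)
        assume un: "u \<notin> set P"
        have "x \<in> set C" using that(1) C(2) by simp
        then obtain m where m: "m < length C" "x = C!m" unfolding in_set_conv_nth by blast
        have "set C \<subseteq> V" using C(2) PV by simp
        then have rp: "is_path V E (rotate m C)" by (rule rot_path[OF C(1) _ C(3,4,5)])
        have r0: "rotate m C ! 0 = x" using m C(4) nth_rotate[of 0 C m] by simp
        have rne: "rotate m C \<noteq> []" using C(4) by simp
        have un2: "u \<notin> set (rotate m C)" using un C(2) by simp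
        have "{u, rotate m C ! 0} \<in> E" using r0 that(3) by (simp add: insert_commute)
        then have "is_path V E (u # rotate m C)" by (rule path_cons[OF rp rne that(2) un2])
        then have "length (u # rotate m C) \<le> length P" by (rule Pmax)
        then show False using lenC by simp
      qed
      have sub: "{e\<in>E. e \<inter> set P \<noteq> {}} \<subseteq> {Y. Y \<subseteq> set P \<and> card Y = 2}"
      proof
        fix e assume e: "e \<in> {e\<in>E. e \<inter> set P \<noteq> {}}"
        then have ce: "card e = 2" "e \<subseteq> V" "e \<in> E" using wf by auto
        obtain a b where ab0: "e = {a,b}" "a \<noteq> b" by (rule card2E[OF ce(1)])
        then have ab: "a \<in> V" "b \<in> V" using ce by auto
        have eab: "{a,b} \<in> E" "{b,a} \<in> E" using ce(3) ab0(1) by (auto simp: insert_commute)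
        have "a \<in> set P \<or> b \<in> set P" using e ab0(1) by auto
        then have "a \<in> set P \<and> b \<in> set P"
        proof
          assume "a \<in> set P" then show ?thesis using noout[OF _ ab(2) eab(1)] by blast
        next
          assume "b \<in> set P" then show ?thesis using noout[OF _ ab(1) eab(2)] by blast
        qed
        then show "e \<in> {Y. Y \<subseteq> set P \<and> card Y = 2}" using ab0 ce(1) by auto
      qed
      have finY: "finite {Y. Y \<subseteq> set P \<and> card Y = 2}"
        by (rule finite_subset[of _ "Pow (set P)"]) auto
      have "card {e\<in>E. e \<inter> set P \<noteq> {}} \<le> card {Y. Y \<subseteq> set P \<and> card Y = 2}"
        by (rule card_mono[OF finY sub])
      also have "\<dots> = card (set P) choose 2" by (rule n_subsets) simp
      also have "\<dots> = length P * (length P - 1) div 2" using dP by (simp add: distinct_card choose_two)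
      also have "\<dots> \<le> (length P * (2 * (t-1))) div 2"
        using False by (intro div_le_mono mult_le_mono2) linarith
      also have "\<dots> = (t-1) * card (set P)" using dP by (simp add: distinct_card)
      finally have sm: "card {e\<in>E. e \<inter> set P \<noteq> {}} \<le> (t-1) * card (set P)" .
      have "set P \<noteq> {}" using Pne by simp
      then show ?thesis using IH[OF PV _ sm] by blast
    qed
  qed
qed



lemma take_drop_mem:
  assumes "o' + n \<le> length xs" "x \<in> set (take n (drop o' xs))"
  shows "\<exists>q. o' \<le> q \<and> q < o' + n \<and> x = xs ! q"
proof -
  obtain r where r: "r < length (take n (drop o' xs))" "x = take n (drop o' xs) ! r"
    using assms(2) unfolding in_set_conv_nth by blast
  then have "r < n" by simp
  then show ?thesis using r assms(1) by (intro exI[of _ "o' + r"]) simp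
qed

lemma path_segment:
  assumes "is_path V E xs" "o' + n \<le> length xs"
  shows "is_path V E (take n (drop o' xs)) \<and> length (take n (drop o' xs)) = n"
proof -
  have "distinct (take n (drop o' xs))" using assms(1) unfolding is_path_def by simp
  moreover have "set (take n (drop o' xs)) \<subseteq> V" using assms(1) unfolding is_path_def
    by (meson in_set_dropD in_set_takeD subset_iff)
  moreover have "{take n (drop o' xs) ! i, take n (drop o' xs) ! Suc i} \<in> E"
    if "Suc i < length (take n (drop o' xs))" for i
  proof -
    have "Suc i < n" "Suc (o' + i) < length xs" using that assms(2) by auto
    then show ?thesis using assms(1) unfolding is_path_def by simp
  qed
  ultimately show ?thesis using assms(2) unfolding is_path_def by simp
qed

lemma forest_from_path:
  assumes P: "is_path V E xs" and len: "2 * (\<Sum>i=1..k. a i) \<le> length xs"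
  shows "contains_linear_forest V E k a"
proof -
  define off where "off i = 2 * (\<Sum>j=1..<i. a j)" for i
  define Q where "Q i = take (2 * a i) (drop (off i) xs)" for i
  have offs: "off i + 2 * a i = off (Suc i)" if "i \<ge> 1" for i
    using that unfolding off_def by (simp add: sum.atLeastLessThan_Suc)
  have offmono: "off i \<le> off j" if "i \<le> j" for i j
    unfolding off_def by (intro mult_le_mono2 sum_mono2) (use that in auto)
  have bound: "off i + 2 * a i \<le> length xs" if "i \<in> {1..k}" for i
  proof -
    have "off i + 2 * a i = off (Suc i)" using offs that by simp
    also have "\<dots> \<le> off (Suc k)" using offmono that by simp
    also have "\<dots> = 2 * (\<Sum>i=1..k. a i)" unfolding off_def by (simp add: atLeastLessThanSuc_atLeastAtMost)
    finally show ?thesis using len by simp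
  qed
  have paths: "\<forall>i\<in>{1..k}. is_path V E (Q i) \<and> length (Q i) = 2 * a i"
    using path_segment[OF P bound] unfolding Q_def by blast
  have disj: "set (Q i) \<inter> set (Q j) = {}" if ij: "i \<in> {1..k}" "j \<in> {1..k}" "i < j" for i j
  proof (rule ccontr)
    assume "set (Q i) \<inter> set (Q j) \<noteq> {}"
    then obtain x where x: "x \<in> set (Q i)" "x \<in> set (Q j)" by blast
    obtain q1 where q1: "off i \<le> q1" "q1 < off i + 2 * a i" "x = xs ! q1"
      using take_drop_mem[OF bound[OF ij(1)]] x(1) unfolding Q_def by blast
    obtain q2 where q2: "off j \<le> q2" "q2 < off j + 2 * a j" "x = xs ! q2"
      using take_drop_mem[OF bound[OF ij(2)]] x(2) unfolding Q_def by blast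
    have "off i + 2 * a i \<le> off j" using offs[of i] offmono[of "Suc i" j] ij by auto
    then have "q1 < q2" using q1 q2 by simp
    moreover have "q2 < length xs" using q2 bound[OF ij(2)] by simp
    ultimately have "xs ! q1 \<noteq> xs ! q2" using P unfolding is_path_def
      by (simp add: nth_eq_iff_index_eq)
    then show False using q1 q2 by simp
  qed
  have disj2: "\<forall>i\<in>{1..k}. \<forall>j\<in>{1..k}. i \<noteq> j \<longrightarrow> set (Q i) \<inter> set (Q j) = {}"
  proof (intro ballI impI)
    fix i j assume "i \<in> {1..k}" "j \<in> {1..k}" "i \<noteq> j"
    then show "set (Q i) \<inter> set (Q j) = {}" using disj[of i j] disj[of j i]
      by (cases "i < j") (auto simp: Int_commute)
  qed
  show ?thesis unfolding contains_linear_forest_def using paths disj2 by blast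
qed



lemma deg_mono: "finite W \<Longrightarrow> S \<subseteq> W \<Longrightarrow> deg_in E S v \<le> deg_in E W v"
  unfolding deg_in_def by (rule card_mono) auto

lemma core:
  fixes d :: nat
  assumes wf: "\<forall>e\<in>E. card e = 2"
  shows "finite W \<Longrightarrow> \<exists>S\<subseteq>W. (\<forall>v\<in>S. d \<le> deg_in E S v) \<and> (\<forall>v\<in>W-S. deg_in E S v < d)
     \<and> card {e\<in>E. e \<subseteq> W} \<le> card {e\<in>E. e \<subseteq> S} + (d-1) * card (W-S)"
proof (induction "card W" arbitrary: W rule: less_induct)
  case less
  note fin = less.prems
  show ?case
  proof (cases "\<forall>v\<in>W. d \<le> deg_in E W v")
    case True
    then show ?thesis by (intro exI[of _ W]) auto
  next
    case False
    then obtain v where v: "v \<in> W" "deg_in E W v < d" by (auto simp: not_le)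
    define W' where "W' = W - {v}"
    have finW': "finite W'" using fin W'_def by simp
    have "card W' < card W" unfolding W'_def by (rule card_Diff1_less[OF fin v(1)])
    then obtain S where S: "S \<subseteq> W'" "\<forall>v\<in>S. d \<le> deg_in E S v" "\<forall>v\<in>W'-S. deg_in E S v < d"
      "card {e\<in>E. e \<subseteq> W'} \<le> card {e\<in>E. e \<subseteq> S} + (d-1) * card (W'-S)"
      using less.hyps[OF _ finW'] by blast
    have SW: "S \<subseteq> W" using S(1) W'_def by auto
    have dv: "deg_in E S v < d" using deg_mono[OF fin SW, of E v] v by simp
    have WS: "W - S = insert v (W' - S)" "v \<notin> W' - S" using S(1) v W'_def by auto
    have cWS: "card (W - S) = Suc (card (W' - S))" using WS finW' by simp
    have sub: "{e\<in>E. e \<subseteq> W} \<subseteq> {e\<in>E. e \<subseteq> W'} \<union> (\<lambda>u. {v,u}) ` {u\<in>W. {v,u} \<in> E}"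
    proof
      fix e assume e: "e \<in> {e\<in>E. e \<subseteq> W}"
      show "e \<in> {e\<in>E. e \<subseteq> W'} \<union> (\<lambda>u. {v,u}) ` {u\<in>W. {v,u} \<in> E}"
      proof (cases "v \<in> e")
        case False then show ?thesis using e W'_def by auto
      next
        case True
        have "card e = 2" using e wf by auto
        then obtain a b where ab: "e = {a,b}" "a \<noteq> b" by (rule card2E)
        show ?thesis
        proof (cases "a = v")
          case True
          then have "b \<in> {u\<in>W. {v,u} \<in> E}" using e ab by auto
          then show ?thesis using ab True by blast
        next
          case False
          then have "b = v" using ab \<open>v \<in> e\<close> by auto
          then have "a \<in> {u\<in>W. {v,u} \<in> E}" "e = {v,a}" using e ab by (auto simp: insert_commute)
          then show ?thesis by blast
        qed
      qed
    qed
    have fin1: "finite {u\<in>W. {v,u} \<in> E}" using fin by simp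
    have fin2: "finite {e\<in>E. e \<subseteq> W'}"
      by (rule finite_subset[of _ "Pow W'"]) (use finW' in auto)
    have "card {e\<in>E. e \<subseteq> W} \<le> card ({e\<in>E. e \<subseteq> W'} \<union> (\<lambda>u. {v,u}) ` {u\<in>W. {v,u} \<in> E})"
      by (rule card_mono[OF _ sub]) (simp add: fin1 fin2)
    also have "\<dots> \<le> card {e\<in>E. e \<subseteq> W'} + card ((\<lambda>u. {v,u}) ` {u\<in>W. {v,u} \<in> E})"
      by (rule card_Un_le)
    also have "card ((\<lambda>u. {v,u}) ` {u\<in>W. {v,u} \<in> E}) \<le> deg_in E W v"
      unfolding deg_in_def by (rule card_image_le[OF fin1])
    finally have "card {e\<in>E. e \<subseteq> W} \<le> card {e\<in>E. e \<subseteq> W'} + (d - 1)" using v(2) by simp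
    then have "card {e\<in>E. e \<subseteq> W} \<le> card {e\<in>E. e \<subseteq> S} + (d-1) * card (W-S)"
      using S(4) cWS by simp
    moreover have "\<forall>u\<in>W-S. deg_in E S u < d" using S(3) dv WS(1) by auto
    ultimately show ?thesis using SW S(2) by blast
  qed
qed



theorem lemma3p2:
  fixes V :: "'a set" and E :: "'a set set" and k :: nat and a :: "nat \<Rightarrow> nat"
  assumes "simple_graph V E"
    and "k \<ge> 2"
    and "\<forall>i\<in>{1..<k}. a i \<ge> a (Suc i)"
    and "a k \<ge> 1"
    and "int (card V) > (int (\<Sum>i=1..k. a i))^2 - int (\<Sum>i=1..k. a i) - 1"
    and "\<not> contains_linear_forest V E k a"
    and "int (num_edges E) \<ge> (int (\<Sum>i=1..k. a i) - 1) * int (card V)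
            - ((int (\<Sum>i=1..k. a i))^2 - int (\<Sum>i=1..k. a i) - 1)"
  shows "\<exists>S \<subseteq> V.
           int (card S) \<ge> int (card V) - ((int (\<Sum>i=1..k. a i))^2 - int (\<Sum>i=1..k. a i) - 1)
         \<and> (\<forall>v\<in>S. int (deg_in E S v) \<ge> int (\<Sum>i=1..k. a i) - 1)
         \<and> (\<forall>v\<in>V - S. int (deg_in E S v) \<le> int (\<Sum>i=1..k. a i) - 2)"
proof -
  define t where "t = (\<Sum>i=1..k. a i)"
  have fin: "finite V" and wf: "\<forall>e\<in>E. e \<subseteq> V \<and> card e = 2"
    using assms(1) unfolding simple_graph_def by auto
  have t2: "t \<ge> 2"
  proof -
    have km: "k - 1 \<in> {1..<k}" using assms(2) by auto
    then have "a (Suc (k-1)) \<le> a (k-1)" using assms(3) by blast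
    moreover have "Suc (k-1) = k" using assms(2) by simp
    ultimately have "a (k-1) \<ge> a k" by simp
    moreover have "{k-1, k} \<subseteq> {1..k}" using assms(2) by auto
    then have "(\<Sum>i\<in>{k-1,k}. a i) \<le> t" unfolding t_def by (intro sum_mono2) auto
    moreover have "(\<Sum>i\<in>{k-1,k}. a i) = a (k-1) + a k" using assms(2) by simp
    ultimately show ?thesis using assms(4) by linarith
  qed
  have wf2: "\<forall>e\<in>E. card e = 2" using wf by blast
  obtain S where S: "S \<subseteq> V" "\<forall>v\<in>S. t - 1 \<le> deg_in E S v" "\<forall>v\<in>V-S. deg_in E S v < t - 1"
    "card {e\<in>E. e \<subseteq> V} \<le> card {e\<in>E. e \<subseteq> S} + (t - 1 - 1) * card (V-S)"
    using core[where d="t-1", OF wf2 fin] by blast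
  have EV: "{e\<in>E. e \<subseteq> V} = E" using wf by auto
  define n where "n = card V"
  define s where "s = card (V - S)"
  define c0 where "c0 = (int t)^2 - int t - 1"
  have finS: "finite S" using fin S(1) finite_subset by blast
  have "card (V - S) = card V - card S" by (rule card_Diff_subset[OF finS S(1)])
  moreover have "card S \<le> card V" by (rule card_mono[OF fin S(1)])
  ultimately have cS: "card S = n - s" "s \<le> n" unfolding n_def s_def by auto
  have bound: "int s \<le> c0"
  proof (rule ccontr)
    assume "\<not> int s \<le> c0"
    then have sbig: "int s \<ge> c0 + 1" by simp
    have "card E \<le> card {e\<in>E. e \<subseteq> S} + (t - 2) * s"
      using S(4) unfolding EV s_def by (simp add: numeral_2_eq_2)
    then have "int (card E) \<le> int (card {e\<in>E. e \<subseteq> S} + (t - 2) * s)"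
      by (simp only: of_nat_le_iff)
    then have "int (card E) \<le> int (card {e\<in>E. e \<subseteq> S}) + int (t - 2) * int s"
      by (simp only: of_nat_add of_nat_mult)
    moreover have "int (t - 2) = int t - 2" using t2 by simp
    ultimately have e1: "int (card E) \<le> int (card {e\<in>E. e \<subseteq> S}) + (int t - 2) * int s" by simp
    have e2: "int (card E) \<ge> (int t - 1) * int n - c0"
      using assms(7) unfolding num_edges_def t_def[symmetric] n_def c0_def .
    have "int (card {e\<in>E. e \<subseteq> S}) \<ge> (int t - 1) * int n - c0 - (int t - 2) * int s"
      using e1 e2 by linarith
    moreover have "(int t - 1) * int n - c0 - (int t - 2) * int s = (int t - 1) * (int n - int s) + int s - c0"
      by (simp add: algebra_simps)
    ultimately have g: "int (card {e\<in>E. e \<subseteq> S}) > (int t - 1) * (int n - int s)" using sbig by linarith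
    have "int n - int s = int (card S)" using cS by simp
    moreover have "int t - 1 = int (t - 1)" using t2 by simp
    ultimately have "(int t - 1) * (int n - int s) = int ((t - 1) * card S)" by (simp only: of_nat_mult)
    then have "int ((t - 1) * card S) < int (card {e\<in>E. e \<subseteq> S})" using g by linarith
    then have big: "(t - 1) * card S < card {e\<in>E. e \<subseteq> S}" by (simp only: of_nat_less_iff)
    have wfS: "\<forall>e\<in>{e\<in>E. e \<subseteq> S}. e \<subseteq> S \<and> card e = 2" using wf by auto
    obtain xs where xs: "is_path S {e\<in>E. e \<subseteq> S} xs" "2 * t \<le> length xs"
      using EG_aux[OF _ finS wfS big] t2 by auto
    have "is_path V E xs" by (rule path_mono[OF xs(1)]) (use S(1) in auto)
    moreover have "2 * (\<Sum>i=1..k. a i) \<le> length xs" using xs(2) unfolding t_def .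
    ultimately have "contains_linear_forest V E k a" by (rule forest_from_path)
    then show False using assms(6) by blast
  qed
  show ?thesis
  proof (intro exI[of _ S] conjI)
    show "S \<subseteq> V" by (rule S(1))
    show "int (card S) \<ge> int (card V) - ((int (\<Sum>i=1..k. a i))^2 - int (\<Sum>i=1..k. a i) - 1)"
    proof -
      have "int (card S) = int n - int s" using cS by simp
      then show ?thesis using bound unfolding c0_def t_def[symmetric] n_def by linarith
    qed
    show "\<forall>v\<in>S. int (deg_in E S v) \<ge> int (\<Sum>i=1..k. a i) - 1"
    proof
      fix v assume "v \<in> S"
      then have "t - 1 \<le> deg_in E S v" using S(2) by blast
      then show "int (deg_in E S v) \<ge> int (\<Sum>i=1..k. a i) - 1" using t2 unfolding t_def[symmetric] by linarith
    qed
    show "\<forall>v\<in>V - S. int (deg_in E S v) \<le> int (\<Sum>i=1..k. a i) - 2"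
    proof
      fix v assume "v \<in> V - S"
      then have "deg_in E S v < t - 1" using S(3) by blast
      then show "int (deg_in E S v) \<le> int (\<Sum>i=1..k. a i) - 2" using t2 unfolding t_def[symmetric] by linarith
    qed
  qed
qed

end
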